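(* Assume $p,q\in[0,1]$. Let $n\ge3$. If $v\in I_n$ has $k^{(r)}_v>0$, then there exists $u\in\alpha_3(v)$ and there exist $\tilde a,\tilde b,\tilde c,\tilde d$ with $\tilde a\overset m\sim\tilde b$, $\tilde c\overset m\sim\tilde d$ and $u\in\tilde\alpha(\tilde a)\cap\tilde\alpha(\tilde b)\cap\tilde\alpha(\tilde c)\cap\tilde\alpha(\tilde d)$, such that either $\tilde a,\tilde b,\tilde c,\tilde d\in\tilde I_n$ with $\tilde a,\tilde b,\tilde d$ distinct, or $\tilde a,\tilde b\in\tilde I_{n-1}$ and $\tilde c,\tilde d\in\tilde I_n$.
   Context: Ulam–Harris labels: $\mathcal U_n=\mathbb N^n$ ($n\ge0$, $\mathcal U_0=\{\emptyset\}$), $\mathcal U=\bigcup_{n\ge0}\mathcal U_n$; for $u=u_1\dots u_k$ write $ui=u_1\dots u_ki$. Let $(\xi_u)_{u\in\mathcal U}$ be i.i.d. Poisson with mean $1+p$, and $(\delta_{u,v})_{u,v\in\mathcal U}$, $(\mu_{\{u,v\}})_{u\ne v\in\mathcal U}$ i.i.d. Bernoulli with mean $q$, all independent. The process $\mathcal G(p,q)=(G_n)_{n\ge0}$, $G_n=(V_n,E_n)$: $G_0=(\{\emptyset\},\emptyset)$, and $I_m=V_m\cap\mathcal U_m$. Given $G_{n-1}$ ($n\ge1$): (1) for $u\in I_{n-1}$ let $\mathcal K_u=\{v\in V_{n-1}:d_{G_{n-1}}(u,v)=3\}$ and $\mathcal C_u=\{j\in\mathbb N:j\le\xi_u,\ \delta_{v,uj}=0\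 \forall v\in\mathcal K_u\}$; let $\tilde G_n$ have vertex set $V_{n-1}\cup\{ui:u\in I_{n-1},i\in\mathcal C_u\}$ and edge set $E_{n-1}\cup\{\{u,ui\}:u\in I_{n-1},i\in\mathcal C_u\}$, and $\tilde I_n$ its set of vertices in $\mathcal U_n$. (2) For $u,v\in\tilde I_n$ write $u\overset{m}{\sim}v$ iff $d_{\tilde G_n}(u,v)=4$ and $\mu_{\{u,v\}}=1$; let $\sim$ be the equivalence relation on $\tilde I_n$ generated by $\overset m\sim$, and $\pi(u)$ the lexicographically smallest element of the class of $u$. Then $V_n=V_{n-1}\cup\{\pi(u):u\in\tilde I_n\}$, $E_n=E_{n-1}\cup\{\{v,\pi(vi)\}:v\in I_{n-1},i\in\mathcal C_v\}$. (The relation $\overset m\sim$ is defined on each $\tilde I_m$, $m\ge1$, separately.) For $x\in I_n$, $\alpha(x)=\bigcup_{0\le j\le n}\{y\in I_{n-j}:d_{G_n}(y,x)=j\}$ and $\alpha_i(x)=\alpha(x)\cap I_{n-i}$. For $\tilde x\in\tilde I_m$, $\tilde\alpha(\tilde x)=\{\tilde x\}\cup\bigcup_{1\le j\le m}\{y\in I_{m-j}:d_{\tilde G_m}(y,\tilde x)=j\}$. For $x\in I_n$, $k^{(r)}_x=|\{y\in I_{n-1}:\alpha_1(y)\cap\alpha_2(x)=\emptyset,\ d_{G_n}(x,y)=3\}|$. *)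

theory Defs
  imports Complex_Main "HOL-Library.List_Lexorder"
begin

text \<open>Ulam-Harris labels are lists of naturals; the child ui of u is u @ [i].
  Children indices are taken from {1..xi u}.  A graph is a pair (V, E) with
  E a set of two-element sets.\<close>

type_synonym label = "nat list"
type_synonym graph = "label set \<times> label set set"

inductive walk :: "label set set \<Rightarrow> nat \<Rightarrow> label \<Rightarrow> label \<Rightarrow> bool" for E where
  walk0: "walk E 0 u u"
| walkS: "walk E k u w \<Longrightarrow> {w, v} \<in> E \<Longrightarrow> w \<noteq> v \<Longrightarrow> walk E (Suc k) u v"

definition gdist :: "label set set \<Rightarrow> label \<Rightarrow> label \<Rightarrow> nat \<Rightarrow> bool" where
  "gdist E u v j \<longleftrightarrow> walk E j u v \<and> (\<forall>i<j. \<not> walk E i u v)"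

definition Ilev :: "label set \<Rightarrow> nat \<Rightarrow> label set" where
  "Ilev V m = {x \<in> V. length x = m}"

definition Kset :: "graph \<Rightarrow> label \<Rightarrow> label set" where
  "Kset G u = {v \<in> fst G. gdist (snd G) u v 3}"

definition Cset :: "(label \<Rightarrow> nat) \<Rightarrow> (label \<Rightarrow> label \<Rightarrow> bool) \<Rightarrow> graph \<Rightarrow> label \<Rightarrow> nat set" where
  "Cset xi delta G u = {j. 1 \<le> j \<and> j \<le> xi u \<and> (\<forall>v\<in>Kset G u. \<not> delta v (u @ [j]))}"

definition tgraph :: "(label \<Rightarrow> nat) \<Rightarrow> (label \<Rightarrow> label \<Rightarrow> bool) \<Rightarrow> nat \<Rightarrow> graph \<Rightarrow> graph" where
  "tgraph xi delta m G =
     (fst G \<union> {u @ [i] | u i. u \<in> Ilev (fst G) (m - 1) \<and> i \<in> Cset xi delta G u},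
      snd G \<union> {{u, u @ [i]} | u i. u \<in> Ilev (fst G) (m - 1) \<and> i \<in> Cset xi delta G u})"

definition msim_in :: "(label set \<Rightarrow> bool) \<Rightarrow> nat \<Rightarrow> graph \<Rightarrow> label \<Rightarrow> label \<Rightarrow> bool" where
  "msim_in mu m Gt x y \<longleftrightarrow> x \<in> Ilev (fst Gt) m \<and> y \<in> Ilev (fst Gt) m \<and>
     gdist (snd Gt) x y 4 \<and> mu {x, y}"

definition piu :: "(label set \<Rightarrow> bool) \<Rightarrow> nat \<Rightarrow> graph \<Rightarrow> label \<Rightarrow> label" where
  "piu mu m Gt u = Min {w \<in> Ilev (fst Gt) m. (symclp (msim_in mu m Gt))\<^sup>*\<^sup>* u w}"

definition next_graph :: "(label \<Rightarrow> nat) \<Rightarrow> (label \<Rightarrow> label \<Rightarrow> bool) \<Rightarrow> (label set \<Rightarrow> bool)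
     \<Rightarrow> nat \<Rightarrow> graph \<Rightarrow> graph" where
  "next_graph xi delta mu m G =
     (let Gt = tgraph xi delta m G in
      (fst G \<union> piu mu m Gt ` Ilev (fst Gt) m,
       snd G \<union> {{v, piu mu m Gt (v @ [i])} | v i. v \<in> Ilev (fst G) (m - 1) \<and> i \<in> Cset xi delta G v}))"

fun Gp :: "(label \<Rightarrow> nat) \<Rightarrow> (label \<Rightarrow> label \<Rightarrow> bool) \<Rightarrow> (label set \<Rightarrow> bool) \<Rightarrow> nat \<Rightarrow> graph" where
  "Gp xi delta mu 0 = ({[]}, {})"
| "Gp xi delta mu (Suc n) = next_graph xi delta mu (Suc n) (Gp xi delta mu n)"

definition Gt :: "(label \<Rightarrow> nat) \<Rightarrow> (label \<Rightarrow> label \<Rightarrow> bool) \<Rightarrow> (label set \<Rightarrow> bool) \<Rightarrow> nat \<Rightarrow> graph" where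
  "Gt xi delta mu m = tgraph xi delta m (Gp xi delta mu (m - 1))"

definition It :: "(label \<Rightarrow> nat) \<Rightarrow> (label \<Rightarrow> label \<Rightarrow> bool) \<Rightarrow> (label set \<Rightarrow> bool) \<Rightarrow> nat \<Rightarrow> label set" where
  "It xi delta mu m = Ilev (fst (Gt xi delta mu m)) m"

definition I :: "(label \<Rightarrow> nat) \<Rightarrow> (label \<Rightarrow> label \<Rightarrow> bool) \<Rightarrow> (label set \<Rightarrow> bool) \<Rightarrow> nat \<Rightarrow> label set" where
  "I xi delta mu m = Ilev (fst (Gp xi delta mu m)) m"

definition msim :: "(label \<Rightarrow> nat) \<Rightarrow> (label \<Rightarrow> label \<Rightarrow> bool) \<Rightarrow> (label set \<Rightarrow> bool) \<Rightarrow> nat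
     \<Rightarrow> label \<Rightarrow> label \<Rightarrow> bool" where
  "msim xi delta mu m x y = msim_in mu m (Gt xi delta mu m) x y"

definition alpha_i :: "(label \<Rightarrow> nat) \<Rightarrow> (label \<Rightarrow> label \<Rightarrow> bool) \<Rightarrow> (label set \<Rightarrow> bool) \<Rightarrow> nat
     \<Rightarrow> nat \<Rightarrow> label \<Rightarrow> label set" where
  "alpha_i xi delta mu n i x = {y \<in> I xi delta mu (n - i). gdist (snd (Gp xi delta mu n)) y x i}"

definition alpha_t :: "(label \<Rightarrow> nat) \<Rightarrow> (label \<Rightarrow> label \<Rightarrow> bool) \<Rightarrow> (label set \<Rightarrow> bool) \<Rightarrow> nat
     \<Rightarrow> label \<Rightarrow> label set" where
  "alpha_t xi delta mu m x = {x} \<union>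
     (\<Union>j\<in>{1..m}. {y \<in> I xi delta mu (m - j). gdist (snd (Gt xi delta mu m)) y x j})"

text \<open>k^(r)_x for x \<in> I_n (alpha_1(y) for y \<in> I_{n-1} is taken in G_{n-1}).\<close>
definition kr :: "(label \<Rightarrow> nat) \<Rightarrow> (label \<Rightarrow> label \<Rightarrow> bool) \<Rightarrow> (label set \<Rightarrow> bool) \<Rightarrow> nat
     \<Rightarrow> label \<Rightarrow> nat" where
  "kr xi delta mu n x = card {y \<in> I xi delta mu (n - 1).
      alpha_i xi delta mu (n - 1) 1 y \<inter> alpha_i xi delta mu n 2 x = {} \<and>
      gdist (snd (Gp xi delta mu n)) x y 3}"

end

theory Submission
  imports Defs
begin



definition lvl :: "label set set \<Rightarrow> bool" where
  "lvl E \<longleftrightarrow> (\<forall>e\<in>E. \<exists>a b. e = {a,b} \<and> length b = Suc (length a))"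

lemma walk0_iff: "walk E 0 u v \<longleftrightarrow> u = v"
  by (auto elim: walk.cases intro: walk.intros)

lemma walkSuc_iff: "walk E (Suc k) u v \<longleftrightarrow> (\<exists>w. walk E k u w \<and> {w,v} \<in> E \<and> w \<noteq> v)"
  by (auto elim: walk.cases intro: walk.intros)

lemma walk_mono: "walk E k u v \<Longrightarrow> E \<subseteq> E' \<Longrightarrow> walk E' k u v"
  by (induction rule: walk.induct) (auto intro: walk.intros)

lemma lvl_edge: "lvl E \<Longrightarrow> {a,b} \<in> E \<Longrightarrow> length b = Suc (length a) \<or> length a = Suc (length b)"
  unfolding lvl_def by (fastforce simp: doubleton_eq_iff)

lemma walk_len: "walk E k u v \<Longrightarrow> lvl E \<Longrightarrow> length v \<le> length u + k \<and> length u \<le> length v + k"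
  by (induction rule: walk.induct) (auto dest: lvl_edge)

lemma gdist_intro: "lvl E \<Longrightarrow> walk E j a b \<Longrightarrow> length b = length a + j \<Longrightarrow> gdist E a b j"
  unfolding gdist_def using walk_len by fastforce

lemma walk1: "{a,b} \<in> E \<Longrightarrow> a \<noteq> b \<Longrightarrow> walk E 1 a b"
  using walk.walk0[of E a] walk.walkS by fastforce

lemma walk2: "{a,b} \<in> E \<Longrightarrow> {b,c} \<in> E \<Longrightarrow> a \<noteq> b \<Longrightarrow> b \<noteq> c \<Longrightarrow> walk E 2 a c"
  using walk1[of a b E] walk.walkS[of E 1 a b c] by (simp add: numeral_2_eq_2)

lemma walk3: "{a,b} \<in> E \<Longrightarrow> {b,c} \<in> E \<Longrightarrow> {c,d} \<in> E \<Longrightarrow> a \<noteq> b \<Longrightarrow> b \<noteq> c \<Longrightarrow> c \<noteq> d \<Longrightarrow> walk E 3 a d"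
  using walk2[of a b E c] walk.walkS[of E 2 a c d] by (simp add: numeral_3_eq_3)

lemma walk3E: assumes "walk E 3 a d"
  obtains b c where "{a,b} \<in> E" "{b,c} \<in> E" "{c,d} \<in> E" "a \<noteq> b" "b \<noteq> c" "c \<noteq> d"
  using assms by (auto simp: numeral_3_eq_3 walkSuc_iff walk0_iff)

lemma walk4E: assumes "walk E 4 a d"
  obtains b c e where "{a,b} \<in> E" "{b,c} \<in> E" "{c,e} \<in> E" "{e,d} \<in> E" "a \<noteq> b" "b \<noteq> c" "c \<noteq> e" "e \<noteq> d"
  using assms by (auto simp: eval_nat_numeral walkSuc_iff walk0_iff)




definition good :: "nat \<Rightarrow> graph \<Rightarrow> bool" where
  "good k G \<longleftrightarrow> finite (fst G) \<and> (\<forall>x\<in>fst G. length x \<le> k) \<and> lvl (snd G) \<and> (\<forall>e\<in>snd G. e \<subseteq> fst G)"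

lemma symclp_rtranclp_sym: "(symclp R)\<^sup>*\<^sup>* a b \<Longrightarrow> (symclp R)\<^sup>*\<^sup>* b a"
  using sympD[OF symp_rtranclp[OF symp_on_symclp]] by metis

context fixes xi :: "label \<Rightarrow> nat" and delta :: "label \<Rightarrow> label \<Rightarrow> bool" and mu :: "label set \<Rightarrow> bool"
begin

lemma tg_fst: "fst (tgraph xi delta m G) = fst G \<union> {u @ [i] | u i. u \<in> Ilev (fst G) (m - 1) \<and> i \<in> Cset xi delta G u}"
  by (simp add: tgraph_def)

lemma tg_snd: "snd (tgraph xi delta m G) = snd G \<union> {{u, u @ [i]} | u i. u \<in> Ilev (fst G) (m - 1) \<and> i \<in> Cset xi delta G u}"
  by (simp add: tgraph_def)

lemma tg_top: "good k G \<Longrightarrow> x \<in> Ilev (fst (tgraph xi delta (Suc k) G)) (Suc k) \<longleftrightarrow>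
   (\<exists>u i. x = u @ [i] \<and> u \<in> Ilev (fst G) k \<and> i \<in> Cset xi delta G u)"
  unfolding tg_fst good_def Ilev_def by force

lemma tg_finite: "finite (fst G) \<Longrightarrow> finite (fst (tgraph xi delta m G))"
proof -
  assume f: "finite (fst G)"
  have "{u @ [i] | u i. u \<in> Ilev (fst G) (m - 1) \<and> i \<in> Cset xi delta G u}
     \<subseteq> (\<Union>u\<in>fst G. (\<lambda>i. u @ [i]) ` {..xi u})"
    by (auto simp: Ilev_def Cset_def)
  moreover have "finite (\<Union>u\<in>fst G. (\<lambda>i. u @ [i]) ` {..xi u})" using f by blast
  ultimately show ?thesis unfolding tg_fst using f by (meson finite_Un finite_subset)
qed


lemma tg_lvl: assumes "good k G" shows "lvl (snd (tgraph xi delta m G))"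
  unfolding lvl_def
proof
  fix e assume "e \<in> snd (tgraph xi delta m G)"
  then consider "e \<in> snd G" | u i where "e = {u, u @ [i]}" unfolding tg_snd by blast
  then show "\<exists>a b. e = {a, b} \<and> length b = Suc (length a)"
  proof cases
    case 1 then show ?thesis using assms unfolding good_def lvl_def by blast
  next
    case 2 then show ?thesis by (intro exI[of _ u] exI[of _ "u @ [i]"]) simp
  qed
qed

lemma tg_top_edge: assumes g: "good k G" and e: "{a,b} \<in> snd (tgraph xi delta (Suc k) G)" and lb: "length b = Suc k"
  shows "a \<in> Ilev (fst G) k \<and> (\<exists>i. b = a @ [i] \<and> i \<in> Cset xi delta G a)"
proof -
  have "{a,b} \<notin> snd G"
  proof
    assume "{a,b} \<in> snd G"
    then have "b \<in> fst G" using g unfolding good_def by blast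
    then show False using g lb unfolding good_def by fastforce
  qed
  then obtain u i where u: "{a,b} = {u, u@[i]}" "u \<in> Ilev (fst G) k" "i \<in> Cset xi delta G u"
    using e unfolding tg_snd by auto
  then have "length u = k" by (simp add: Ilev_def)
  with u lb show ?thesis by (auto simp: doubleton_eq_iff)
qed

lemma tg_low_edge: assumes g: "good k G" and e: "{a,b} \<in> snd (tgraph xi delta (Suc k) G)"
   and "length a \<le> k" "length b \<le> k" shows "{a,b} \<in> snd G"
proof (rule ccontr)
  assume "{a,b} \<notin> snd G"
  then obtain u i where u: "{a,b} = {u, u@[i]}" "u \<in> Ilev (fst G) k" "i \<in> Cset xi delta G u"
    using e unfolding tg_snd by auto
  then have "length u = k" by (simp add: Ilev_def)
  with u assms show False by (auto simp: doubleton_eq_iff)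
qed

lemma L4: assumes g: "good k G" and m: "msim_in mu (Suc k) (tgraph xi delta (Suc k) G) x x'"
  shows "\<exists>p i p' i' c. x = p @ [i] \<and> p \<in> Ilev (fst G) k \<and> i \<in> Cset xi delta G p \<and>
     x' = p' @ [i'] \<and> p' \<in> Ilev (fst G) k \<and> i' \<in> Cset xi delta G p' \<and>
     {c, p} \<in> snd G \<and> {c, p'} \<in> snd G \<and> c \<in> fst G \<and> Suc (length c) = k"
proof -
  let ?T = "tgraph xi delta (Suc k) G"
  have xI: "x \<in> Ilev (fst ?T) (Suc k)" and x'I: "x' \<in> Ilev (fst ?T) (Suc k)"
    and gd: "gdist (snd ?T) x x' 4" using m unfolding msim_in_def by auto
  obtain p i where p: "x = p @ [i]" "p \<in> Ilev (fst G) k" "i \<in> Cset xi delta G p"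
    using xI tg_top[OF g] by blast
  obtain p' i' where p': "x' = p' @ [i']" "p' \<in> Ilev (fst G) k" "i' \<in> Cset xi delta G p'"
    using x'I tg_top[OF g] by blast
  have lx: "length x = Suc k" "length x' = Suc k" using xI x'I by (auto simp: Ilev_def)
  have lp: "length p = k" "length p' = k" using p p' by (auto simp: Ilev_def)
  have lv: "lvl (snd ?T)" using tg_lvl[OF g] .
  obtain z1 z2 z3 where z: "{x,z1} \<in> snd ?T" "{z1,z2} \<in> snd ?T" "{z2,z3} \<in> snd ?T" "{z3,x'} \<in> snd ?T"
    "x \<noteq> z1" "z1 \<noteq> z2" "z2 \<noteq> z3" "z3 \<noteq> x'"
    using gd unfolding gdist_def by (auto elim: walk4E)
  have "z1 = p" using tg_top_edge[OF g, of z1 x] z(1) lx p(1) by (auto simp: insert_commute)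
  have "z3 = p'" using tg_top_edge[OF g, of z3 x'] z(4) lx p'(1) by auto
  have "length z2 = Suc k \<or> Suc (length z2) = k" using lvl_edge[OF lv z(2)] \<open>z1 = p\<close> lp by auto
  then show ?thesis
  proof
    assume l2: "length z2 = Suc k"
    have "z2 = p @ [last z2]" using tg_top_edge[OF g, of p z2] z(2) l2 \<open>z1 = p\<close> by auto
    moreover have "z2 = p' @ [last z2]" using tg_top_edge[OF g, of p' z2] z(3) l2 \<open>z3 = p'\<close>
      by (auto simp: insert_commute)
    ultimately have "p = p'" by (metis butlast_snoc)
    have "walk (snd ?T) 2 x x'"
      using walk2[of x p "snd ?T" x'] z \<open>z1 = p\<close> \<open>z3 = p'\<close> \<open>p = p'\<close> by (auto simp: insert_commute)
    with gd show ?thesis unfolding gdist_def by auto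
  next
    assume l2: "Suc (length z2) = k"
    have e1: "{z2, p} \<in> snd G" using tg_low_edge[OF g, of z2 p] z(2) l2 lp \<open>z1 = p\<close>
      by (auto simp: insert_commute)
    have e2: "{z2, p'} \<in> snd G" using tg_low_edge[OF g, of z2 p'] z(3) l2 lp \<open>z3 = p'\<close> by auto
    have "z2 \<in> fst G" using e1 g unfolding good_def by auto
    with e1 e2 p p' l2 show ?thesis by blast
  qed
qed

end



context fixes xi :: "label \<Rightarrow> nat" and delta :: "label \<Rightarrow> label \<Rightarrow> bool" and mu :: "label set \<Rightarrow> bool"
begin

lemma piu_props: assumes "finite (fst T)" "x \<in> Ilev (fst T) m"
  shows "piu mu m T x \<in> Ilev (fst T) m \<and> (symclp (msim_in mu m T))\<^sup>*\<^sup>* x (piu mu m T x)"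
proof -
  let ?S = "{w \<in> Ilev (fst T) m. (symclp (msim_in mu m T))\<^sup>*\<^sup>* x w}"
  have "finite ?S" using assms(1) by (rule finite_subset[rotated]) (auto simp: Ilev_def)
  moreover have "x \<in> ?S" using assms(2) by auto
  ultimately have "Min ?S \<in> ?S" by (intro Min_in) auto
  then show ?thesis unfolding piu_def by blast
qed

lemma ng_fst: "fst (next_graph xi delta mu m G) = fst G \<union> piu mu m (tgraph xi delta m G) ` Ilev (fst (tgraph xi delta m G)) m"
  by (simp add: next_graph_def Let_def)

lemma ng_snd: "snd (next_graph xi delta mu m G) = snd G \<union>
   {{v, piu mu m (tgraph xi delta m G) (v @ [i])} | v i. v \<in> Ilev (fst G) (m - 1) \<and> i \<in> Cset xi delta G v}"
  by (simp add: next_graph_def Let_def)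

lemma piu_len: assumes g: "good k G" and v: "v \<in> Ilev (fst G) k" and i: "i \<in> Cset xi delta G v"
  shows "piu mu (Suc k) (tgraph xi delta (Suc k) G) (v @ [i]) \<in> Ilev (fst (tgraph xi delta (Suc k) G)) (Suc k)"
proof -
  have "v @ [i] \<in> Ilev (fst (tgraph xi delta (Suc k) G)) (Suc k)" using tg_top[OF g] v i by blast
  moreover have "finite (fst (tgraph xi delta (Suc k) G))" using g tg_finite unfolding good_def by blast
  ultimately show ?thesis using piu_props by blast
qed

lemma ng_good: assumes g: "good k G" shows "good (Suc k) (next_graph xi delta mu (Suc k) G)"
proof -
  let ?T = "tgraph xi delta (Suc k) G"
  have fT: "finite (fst ?T)" using g tg_finite unfolding good_def by blast
  have pl: "\<And>x. x \<in> Ilev (fst ?T) (Suc k) \<Longrightarrow> piu mu (Suc k) ?T x \<in> Ilev (fst ?T) (Suc k)"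
    using piu_props[OF fT] by blast
  have fin: "finite (Ilev (fst ?T) (Suc k))" using fT by (rule finite_subset[rotated]) (auto simp: Ilev_def)
  have A: "finite (fst (next_graph xi delta mu (Suc k) G))"
    unfolding ng_fst using g fin unfolding good_def by simp
  have B: "\<forall>x\<in>fst (next_graph xi delta mu (Suc k) G). length x \<le> Suc k"
  proof
    fix x assume "x \<in> fst (next_graph xi delta mu (Suc k) G)"
    then consider "x \<in> fst G" | z where "z \<in> Ilev (fst ?T) (Suc k)" "x = piu mu (Suc k) ?T z" unfolding ng_fst by blast
    then show "length x \<le> Suc k"
    proof cases
      case 1 then show ?thesis using g unfolding good_def by fastforce
    next
      case 2 then have "x \<in> Ilev (fst ?T) (Suc k)" using pl by blast
      then show ?thesis by (simp add: Ilev_def)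
    qed
  qed
  have C: "lvl (snd (next_graph xi delta mu (Suc k) G))"
    unfolding lvl_def
  proof
    fix e assume "e \<in> snd (next_graph xi delta mu (Suc k) G)"
    then have "e \<in> snd G \<or> (\<exists>v i. e = {v, piu mu (Suc k) ?T (v @ [i])} \<and> v \<in> Ilev (fst G) k \<and> i \<in> Cset xi delta G v)"
      unfolding ng_snd by simp
    then consider "e \<in> snd G" | v i where "e = {v, piu mu (Suc k) ?T (v @ [i])}" "v \<in> Ilev (fst G) k" "i \<in> Cset xi delta G v"
      by blast
    then show "\<exists>a b. e = {a, b} \<and> length b = Suc (length a)"
    proof cases
      case 1 then show ?thesis using g unfolding good_def lvl_def by blast
    next
      case 2
      have "length (piu mu (Suc k) ?T (v @ [i])) = Suc k" using piu_len[OF g 2(2,3)] by (simp add: Ilev_def)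
      moreover have "length v = k" using 2(2) by (simp add: Ilev_def)
      ultimately show ?thesis using 2(1) by (intro exI[of _ v] exI[of _ "piu mu (Suc k) ?T (v @ [i])"]) simp
    qed
  qed
  have D: "\<forall>e\<in>snd (next_graph xi delta mu (Suc k) G). e \<subseteq> fst (next_graph xi delta mu (Suc k) G)"
  proof
    fix e assume "e \<in> snd (next_graph xi delta mu (Suc k) G)"
    then have "e \<in> snd G \<or> (\<exists>v i. e = {v, piu mu (Suc k) ?T (v @ [i])} \<and> v \<in> Ilev (fst G) k \<and> i \<in> Cset xi delta G v)"
      unfolding ng_snd by simp
    then consider "e \<in> snd G" | v i where "e = {v, piu mu (Suc k) ?T (v @ [i])}" "v \<in> Ilev (fst G) k" "i \<in> Cset xi delta G v"
      by blast
    then show "e \<subseteq> fst (next_graph xi delta mu (Suc k) G)"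
    proof cases
      case 1 then show ?thesis using g unfolding good_def ng_fst by blast
    next
      case 2
      have "v @ [i] \<in> Ilev (fst ?T) (Suc k)" using tg_top[OF g] 2 by blast
      then have "piu mu (Suc k) ?T (v @ [i]) \<in> fst (next_graph xi delta mu (Suc k) G)" unfolding ng_fst by blast
      moreover have "v \<in> fst (next_graph xi delta mu (Suc k) G)" using 2(2) unfolding ng_fst Ilev_def by blast
      ultimately show ?thesis using 2(1) by blast
    qed
  qed
  show ?thesis using A B C D by (simp only: good_def)
qed

lemma good_Gp: "good m (Gp xi delta mu m)"
proof (induction m)
  case 0 then show ?case by (simp add: good_def lvl_def)
next
  case (Suc m) then show ?case using ng_good[OF Suc.IH] by (simp only: Gp.simps(2))
qed

lemma mono_Gp: "k \<le> m \<Longrightarrow> fst (Gp xi delta mu k) \<subseteq> fst (Gp xi delta mu m) \<and> snd (Gp xi delta mu k) \<subseteq> snd (Gp xi delta mu m)"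
proof (induction m)
  case 0 then show ?case by simp
next
  case (Suc m)
  have "fst (Gp xi delta mu m) \<subseteq> fst (Gp xi delta mu (Suc m)) \<and> snd (Gp xi delta mu m) \<subseteq> snd (Gp xi delta mu (Suc m))"
    unfolding Gp.simps(2) ng_fst ng_snd by (intro conjI Un_upper1)
  show ?case
  proof (cases "k = Suc m")
    case True then show ?thesis by simp
  next
    case False then have "k \<le> m" using Suc.prems by simp
    then show ?thesis using Suc.IH \<open>fst (Gp xi delta mu m) \<subseteq> _ \<and> _\<close> by blast
  qed
qed

lemma lev_Gp: "x \<in> fst (Gp xi delta mu m) \<Longrightarrow> x \<in> fst (Gp xi delta mu (length x))"
proof (induction m)
  case 0 then show ?case by simp
next
  case (Suc m)
  let ?T = "tgraph xi delta (Suc m) (Gp xi delta mu m)"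
  show ?case
  proof (cases "x \<in> fst (Gp xi delta mu m)")
    case True then show ?thesis using Suc.IH by blast
  next
    case False
    then obtain z where z: "z \<in> Ilev (fst ?T) (Suc m)" "x = piu mu (Suc m) ?T z"
      using Suc.prems by (auto simp: ng_fst)
    have "finite (fst ?T)" using good_Gp[of m] tg_finite unfolding good_def by blast
    then have "x \<in> Ilev (fst ?T) (Suc m)" using piu_props z by blast
    then have "length x = Suc m" by (simp add: Ilev_def)
    then show ?thesis using Suc.prems by simp
  qed
qed

lemma ng_top_edge: assumes g: "good k G" and e: "{a,b} \<in> snd (next_graph xi delta mu (Suc k) G)" and lb: "length b = Suc k"
  shows "a \<in> Ilev (fst G) k \<and> (\<exists>i\<in>Cset xi delta G a. b = piu mu (Suc k) (tgraph xi delta (Suc k) G) (a @ [i]))"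
proof -
  have "{a,b} \<notin> snd G"
  proof
    assume "{a,b} \<in> snd G"
    then have "b \<in> fst G" using g unfolding good_def by blast
    then show False using g lb unfolding good_def by fastforce
  qed
  then obtain v i where u: "{a,b} = {v, piu mu (Suc k) (tgraph xi delta (Suc k) G) (v @ [i])}" "v \<in> Ilev (fst G) k" "i \<in> Cset xi delta G v"
    using e unfolding ng_snd by auto
  then have "length v = k" by (simp add: Ilev_def)
  have "length (piu mu (Suc k) (tgraph xi delta (Suc k) G) (v @ [i])) = Suc k" using piu_len[OF g u(2,3)] by (simp add: Ilev_def)
  with u lb \<open>length v = k\<close> show ?thesis by (auto simp: doubleton_eq_iff)
qed

lemma ng_low_edge: assumes g: "good k G" and e: "{a,b} \<in> snd (next_graph xi delta mu (Suc k) G)"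
   and "length a \<le> k" "length b \<le> k" shows "{a,b} \<in> snd G"
proof (rule ccontr)
  assume "{a,b} \<notin> snd G"
  then obtain v i where u: "{a,b} = {v, piu mu (Suc k) (tgraph xi delta (Suc k) G) (v @ [i])}" "v \<in> Ilev (fst G) k" "i \<in> Cset xi delta G v"
    using e unfolding ng_snd by auto
  have "length (piu mu (Suc k) (tgraph xi delta (Suc k) G) (v @ [i])) = Suc k" using piu_len[OF g u(2,3)] by (simp add: Ilev_def)
  with u assms show False by (auto simp: doubleton_eq_iff)
qed

end



context fixes xi :: "label \<Rightarrow> nat" and delta :: "label \<Rightarrow> label \<Rightarrow> bool" and mu :: "label set \<Rightarrow> bool"
begin

lemma new_edge: "p \<in> Ilev (fst G) k \<Longrightarrow> i \<in> Cset xi delta G p \<Longrightarrow> {p, p @ [i]} \<in> snd (tgraph xi delta (Suc k) G)"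
  unfolding tg_snd by auto

lemma old_edge: "e \<in> snd G \<Longrightarrow> e \<in> snd (tgraph xi delta m G)"
  unfolding tg_snd by auto

lemma anc2: assumes g: "good k G" and e: "{u,p} \<in> snd G" and p: "p \<in> Ilev (fst G) k"
  and i: "i \<in> Cset xi delta G p" and l: "Suc (length u) = k"
  shows "gdist (snd (tgraph xi delta (Suc k) G)) u (p @ [i]) 2"
proof -
  have lp: "length p = k" using p by (simp add: Ilev_def)
  have "walk (snd (tgraph xi delta (Suc k) G)) 2 u (p @ [i])"
    apply (rule walk2[OF old_edge[OF e] new_edge[OF p i]])
    using lp l by auto
  then show ?thesis using tg_lvl[OF g] lp l by (intro gdist_intro) auto
qed

lemma anc3: assumes g: "good k G" and e: "{u,c} \<in> snd G" and e2: "{c,p} \<in> snd G" and p: "p \<in> Ilev (fst G) k"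
  and i: "i \<in> Cset xi delta G p" and l: "Suc (length c) = k" "Suc (length u) = length c"
  shows "gdist (snd (tgraph xi delta (Suc k) G)) u (p @ [i]) 3"
proof -
  have lp: "length p = k" using p by (simp add: Ilev_def)
  have "walk (snd (tgraph xi delta (Suc k) G)) 3 u (p @ [i])"
    apply (rule walk3[OF old_edge[OF e] old_edge[OF e2] new_edge[OF p i]])
    using lp l by auto
  then show ?thesis using tg_lvl[OF g] lp l by (intro gdist_intro) auto
qed

lemma L4s: assumes g: "good k G" and r: "symclp (msim_in mu (Suc k) (tgraph xi delta (Suc k) G)) x x'"
  shows "\<exists>c. butlast x \<in> Ilev (fst G) k \<and> last x \<in> Cset xi delta G (butlast x) \<and> x = butlast x @ [last x] \<and>
     butlast x' \<in> Ilev (fst G) k \<and> last x' \<in> Cset xi delta G (butlast x') \<and> x' = butlast x' @ [last x'] \<and>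
     {c, butlast x} \<in> snd G \<and> {c, butlast x'} \<in> snd G \<and> c \<in> fst G \<and> Suc (length c) = k"
  using r
proof (cases rule: symclpE)
  case base
  from L4[OF g base] show ?thesis by auto
next
  case sym
  from L4[OF g sym] show ?thesis by auto
qed

lemma lemM: assumes g0: "good k1 G0"
  and e1: "{c, p} \<in> snd (next_graph xi delta mu (Suc k1) G0)"
  and e2: "{c', p} \<in> snd (next_graph xi delta mu (Suc k1) G0)"
  and cc: "c \<noteq> c'" and lp: "length p = Suc k1"
  shows "\<exists>a b u. msim_in mu (Suc k1) (tgraph xi delta (Suc k1) G0) a b \<and> {u, c} \<in> snd G0 \<and> u \<in> fst G0 \<and>
    Suc (length u) = k1 \<and> gdist (snd (tgraph xi delta (Suc k1) G0)) u a 2 \<and> gdist (snd (tgraph xi delta (Suc k1) G0)) u b 2"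
proof -
  let ?T = "tgraph xi delta (Suc k1) G0"
  let ?R = "symclp (msim_in mu (Suc k1) ?T)"
  have fT: "finite (fst ?T)" using g0 tg_finite unfolding good_def by blast
  obtain s where s: "c \<in> Ilev (fst G0) k1" "s \<in> Cset xi delta G0 c" "p = piu mu (Suc k1) ?T (c @ [s])"
    using ng_top_edge[OF g0 e1 lp] by blast
  obtain t where t: "c' \<in> Ilev (fst G0) k1" "t \<in> Cset xi delta G0 c'" "p = piu mu (Suc k1) ?T (c' @ [t])"
    using ng_top_edge[OF g0 e2 lp] by blast
  have "c @ [s] \<in> Ilev (fst ?T) (Suc k1)" using tg_top[OF g0] s by blast
  then have r1: "?R\<^sup>*\<^sup>* (c @ [s]) p" using piu_props[OF fT] s(3) by blast
  have "c' @ [t] \<in> Ilev (fst ?T) (Suc k1)" using tg_top[OF g0] t by blast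
  then have "?R\<^sup>*\<^sup>* (c' @ [t]) p" using piu_props[OF fT] t(3) by blast
  then have "?R\<^sup>*\<^sup>* p (c' @ [t])" by (rule symclp_rtranclp_sym)
  with r1 have r: "?R\<^sup>*\<^sup>* (c @ [s]) (c' @ [t])" by (rule rtranclp_trans)
  have ne: "c @ [s] \<noteq> c' @ [t]" using cc by auto
  obtain b where rb: "?R (c @ [s]) b"
    using r ne by (cases rule: converse_rtranclpE) auto
  obtain u where u: "{u, butlast (c @ [s])} \<in> snd G0" "{u, butlast b} \<in> snd G0" "u \<in> fst G0" "Suc (length u) = k1"
    "butlast b \<in> Ilev (fst G0) k1" "last b \<in> Cset xi delta G0 (butlast b)" "b = butlast b @ [last b]"
    using L4s[OF g0 rb] by blast
  have uc: "{u, c} \<in> snd G0" using u(1) by simp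
  have ga: "gdist (snd ?T) u (c @ [s]) 2" using anc2[OF g0 uc s(1,2) u(4)] .
  have gb: "gdist (snd ?T) u b 2" using anc2[OF g0 u(2) u(5,6) u(4)] u(7) by simp
  from rb show ?thesis
  proof (cases rule: symclpE)
    case base then show ?thesis using uc u ga gb by blast
  next
    case sym then show ?thesis using uc u ga gb by blast
  qed
qed

end



theorem lemma6p2:
  fixes p q :: real
    and xi :: "label \<Rightarrow> nat"
    and delta :: "label \<Rightarrow> label \<Rightarrow> bool"
    and mu :: "label set \<Rightarrow> bool"
    and n :: nat and v :: label
  assumes "0 \<le> p" "p \<le> 1" "0 \<le> q" "q \<le> 1"
    and "q = 0 \<Longrightarrow> (\<forall>x y. \<not> delta x y) \<and> (\<forall>x y. x \<noteq> y \<longrightarrow> \<not> mu {x, y})"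
    and "q = 1 \<Longrightarrow> (\<forall>x y. delta x y) \<and> (\<forall>x y. x \<noteq> y \<longrightarrow> mu {x, y})"
    and "n \<ge> 3"
    and "v \<in> I xi delta mu n"
    and "kr xi delta mu n v > 0"
  shows "\<exists>u \<in> alpha_i xi delta mu n 3 v. \<exists>a b c d.
     ((a \<in> It xi delta mu n \<and> b \<in> It xi delta mu n \<and> c \<in> It xi delta mu n \<and> d \<in> It xi delta mu n \<and>
       a \<noteq> b \<and> a \<noteq> d \<and> b \<noteq> d \<and>
       msim xi delta mu n a b \<and> msim xi delta mu n c d \<and>
       u \<in> alpha_t xi delta mu n a \<inter> alpha_t xi delta mu n b \<inter>
            alpha_t xi delta mu n c \<inter> alpha_t xi delta mu n d)
    \<or> (a \<in> It xi delta mu (n - 1) \<and> b \<in> It xi delta mu (n - 1) \<and>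
       c \<in> It xi delta mu n \<and> d \<in> It xi delta mu n \<and>
       msim xi delta mu (n - 1) a b \<and> msim xi delta mu n c d \<and>
       u \<in> alpha_t xi delta mu (n - 1) a \<inter> alpha_t xi delta mu (n - 1) b \<inter>
            alpha_t xi delta mu n c \<inter> alpha_t xi delta mu n d))"
proof -
  let ?goal = ?thesis
  define k2 where "k2 = n - 3"
  define k1 where "k1 = Suc k2"
  define k where "k = Suc k1"
  have nk: "n = Suc k" using assms(7) unfolding k_def k1_def k2_def by arith
  let ?G0 = "Gp xi delta mu k1"
  let ?G1 = "Gp xi delta mu k"
  let ?G2 = "Gp xi delta mu n"
  let ?T1 = "tgraph xi delta k ?G0"
  let ?T2 = "tgraph xi delta n ?G1"
  let ?E0 = "snd ?G0" let ?E1 = "snd ?G1" let ?E2 = "snd ?G2"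
  let ?R = "symclp (msim_in mu n ?T2)"
  have G1: "?G1 = next_graph xi delta mu (Suc k1) ?G0" by (simp add: k_def)
  have G2: "?G2 = next_graph xi delta mu (Suc k) ?G1" by (simp only: nk Gp.simps(2))
  have g0: "good k1 ?G0" and g1: "good k ?G1" and g2: "good n ?G2" by (rule good_Gp)+
  have T1: "Gt xi delta mu k = ?T1" by (simp add: Gt_def k_def)
  have T2: "Gt xi delta mu n = ?T2" by (simp add: Gt_def nk)
  have nm1: "n - 1 = k" "n - 2 = k1" "n - 3 = k2" "k - 1 = k1" "k - 2 = k2"
    using nk unfolding k_def k1_def by auto
  have E01: "?E0 \<subseteq> ?E1" "?E1 \<subseteq> ?E2" "?E0 \<subseteq> ?E2" using mono_Gp[of k1 k] mono_Gp[of k n] mono_Gp[of k1 n]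
    unfolding nk k_def by auto
  have lv1: "lvl ?E1" and lv2: "lvl ?E2" using g1 g2 unfolding good_def by auto
  have Iin: "\<And>x m. x \<in> fst (Gp xi delta mu m) \<Longrightarrow> length x = j \<Longrightarrow> x \<in> I xi delta mu j" for j
    unfolding I_def Ilev_def using lev_Gp by blast
  have "{y \<in> I xi delta mu (n - 1). alpha_i xi delta mu (n - 1) 1 y \<inter> alpha_i xi delta mu n 2 v = {} \<and>
      gdist ?E2 v y 3} \<noteq> {}"
    using assms(9) unfolding kr_def by (metis card.empty less_irrefl)
  then obtain y where yI: "y \<in> I xi delta mu k" and disj: "alpha_i xi delta mu k 1 y \<inter> alpha_i xi delta mu n 2 v = {}"
    and gvy: "gdist ?E2 v y 3" using nm1 by auto
  have lv: "length v = n" "v \<in> fst ?G2" using assms(8) unfolding I_def Ilev_def by auto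
  have ly: "length y = k" "y \<in> fst ?G1" using yI unfolding I_def Ilev_def by auto
  obtain z1 z2 where z: "{v,z1} \<in> ?E2" "{z1,z2} \<in> ?E2" "{z2,y} \<in> ?E2" "v \<noteq> z1" "z1 \<noteq> z2" "z2 \<noteq> y"
    using gvy unfolding gdist_def by (auto elim: walk3E)
  have z1V: "z1 \<in> fst ?G2" and z2V: "z2 \<in> fst ?G2" using z g2 unfolding good_def by auto
  have lz1: "length z1 = k" using lvl_edge[OF lv2 z(1)] z1V g2 lv nk unfolding good_def by fastforce
  have "length z2 = k1 \<or> length z2 = n" using lvl_edge[OF lv2 z(2)] lz1 nk k_def by auto
  then show ?thesis
  proof
    assume l2: "length z2 = k1"
    have "{z2, y} \<in> ?E1" using ng_low_edge[OF g1, of z2 y] z(3) G2 l2 ly k_def by simp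
    then have "gdist ?E1 z2 y 1" using lv1 ly l2 k_def z(6) by (intro gdist_intro walk1) auto
    then have A: "z2 \<in> alpha_i xi delta mu k 1 y" unfolding alpha_i_def using Iin[OF z2V l2] nm1 by simp
    have "walk ?E2 2 z2 v" using z by (intro walk2[of z2 z1 _ v]) (auto simp: insert_commute)
    then have "gdist ?E2 z2 v 2" using lv2 lv l2 nk k_def by (intro gdist_intro) auto
    then have B: "z2 \<in> alpha_i xi delta mu n 2 v" unfolding alpha_i_def using Iin[OF z2V l2] nm1 by simp
    show ?thesis using A B disj by blast
  next
    assume l2: "length z2 = n"
    obtain i where W: "z1 \<in> Ilev (fst ?G1) k" "i \<in> Cset xi delta ?G1 z1" "z2 = piu mu n ?T2 (z1 @ [i])"
      using ng_top_edge[where xi=xi and delta=delta and mu=mu and a=z1 and b=z2, OF g1] z(2) G2 l2 nk by auto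
    obtain j where Y: "y \<in> Ilev (fst ?G1) k" "j \<in> Cset xi delta ?G1 y" "z2 = piu mu n ?T2 (y @ [j])"
      using ng_top_edge[where xi=xi and delta=delta and mu=mu and a=y and b=z2, OF g1] z(3) G2 l2 nk by (auto simp: insert_commute)
    have Wy: "z1 \<noteq> y"
    proof
      assume "z1 = y"
      then have "walk ?E2 1 v y" using z by (intro walk1) auto
      then show False using gvy unfolding gdist_def by auto
    qed
    have fT2: "finite (fst ?T2)" using g1 tg_finite unfolding good_def by blast
    have x0I: "z1 @ [i] \<in> Ilev (fst ?T2) n" using tg_top[where xi=xi and delta=delta, OF g1] W nk by blast
    have yjI: "y @ [j] \<in> Ilev (fst ?T2) n" using tg_top[where xi=xi and delta=delta, OF g1] Y nk by blast
    have r1: "?R\<^sup>*\<^sup>* (z1 @ [i]) z2" using piu_props[OF fT2 x0I] W(3) by simp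
    have "?R\<^sup>*\<^sup>* (y @ [j]) z2" using piu_props[OF fT2 yjI] Y(3) by simp
    then have "?R\<^sup>*\<^sup>* z2 (y @ [j])" by (rule symclp_rtranclp_sym)
    with r1 have rr: "?R\<^sup>*\<^sup>* (z1 @ [i]) (y @ [j])" by (rule rtranclp_trans)
    have cvt: "\<And>x x'. ?R x x' \<Longrightarrow> symclp (msim_in mu (Suc k) (tgraph xi delta (Suc k) ?G1)) x x'"
      using nk by simp
    have final: "\<And>a b u g c d. msim_in mu k ?T1 a b \<Longrightarrow> {u,g} \<in> ?E0 \<Longrightarrow> u \<in> fst ?G0 \<Longrightarrow> Suc (length u) = k1 \<Longrightarrow>
        gdist (snd ?T1) u a 2 \<Longrightarrow> gdist (snd ?T1) u b 2 \<Longrightarrow> msim_in mu n ?T2 c d \<Longrightarrow>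
        {g, butlast c} \<in> ?E1 \<Longrightarrow> {g, butlast d} \<in> ?E1 \<Longrightarrow> {g, z1} \<in> ?E1 \<Longrightarrow> Suc (length g) = k \<Longrightarrow> ?thesis"
    proof -
      fix a b u g c d
      assume ab: "msim_in mu k ?T1 a b" and ug: "{u,g} \<in> ?E0" and uV: "u \<in> fst ?G0" and lu: "Suc (length u) = k1"
        and ga: "gdist (snd ?T1) u a 2" and gb: "gdist (snd ?T1) u b 2" and cd: "msim_in mu n ?T2 c d"
        and gc: "{g, butlast c} \<in> ?E1" and gd: "{g, butlast d} \<in> ?E1" and gw: "{g, z1} \<in> ?E1" and lg: "Suc (length g) = k"
      have uI: "u \<in> I xi delta mu k2" using Iin[OF uV] lu k1_def by simp
      have "walk ?E2 3 u v"
      proof (rule walk3[of u g _ z1])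
        show "{u, g} \<in> ?E2" using ug E01 by blast
        show "{g, z1} \<in> ?E2" using gw E01 by blast
        show "{z1, v} \<in> ?E2" using z(1) by (simp add: insert_commute)
      qed (use lu lg lz1 lv nk k_def in auto)
      then have "gdist ?E2 u v 3" using lv2 lu lv nk k_def k1_def by (intro gdist_intro) auto
      then have uA: "u \<in> alpha_i xi delta mu n 3 v" unfolding alpha_i_def using uI nm1 by simp
      obtain cc where cdf: "butlast c \<in> Ilev (fst ?G1) k" "last c \<in> Cset xi delta ?G1 (butlast c)" "c = butlast c @ [last c]"
        "butlast d \<in> Ilev (fst ?G1) k" "last d \<in> Cset xi delta ?G1 (butlast d)" "d = butlast d @ [last d]"
        using L4s[OF g1 cvt[OF symclpI1[where r="msim_in mu n ?T2", OF cd]]] by blast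
      have ugE1: "{u,g} \<in> ?E1" using ug E01 by blast
      have "gdist (snd (tgraph xi delta (Suc k) ?G1)) u (butlast c @ [last c]) 3"
        using anc3[OF g1 ugE1 gc cdf(1,2) lg] lu lg k_def by simp
      then have gc3: "gdist (snd (Gt xi delta mu n)) u c 3" using cdf(3) T2 nk by simp
      have "gdist (snd (tgraph xi delta (Suc k) ?G1)) u (butlast d @ [last d]) 3"
        using anc3[OF g1 ugE1 gd cdf(4,5) lg] lu lg k_def by simp
      then have gd3: "gdist (snd (Gt xi delta mu n)) u d 3" using cdf(6) T2 nk by simp
      have n3: "(3::nat) \<in> {1..n}" using assms(7) by simp
      have k2: "(2::nat) \<in> {1..n-1}" using nm1 k_def k1_def by simp
      have uIn3: "u \<in> I xi delta mu (n - 3)" using uI nm1 by simp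
      have uIk2: "u \<in> I xi delta mu (n - 1 - 2)" using uI nm1 by simp
      have "u \<in> alpha_t xi delta mu n c" unfolding alpha_t_def using n3 uIn3 gc3 by blast
      moreover have "u \<in> alpha_t xi delta mu n d" unfolding alpha_t_def using n3 uIn3 gd3 by blast
      moreover have "u \<in> alpha_t xi delta mu (n - 1) a" unfolding alpha_t_def using k2 uIk2 ga T1 nm1 by auto
      moreover have "u \<in> alpha_t xi delta mu (n - 1) b" unfolding alpha_t_def using k2 uIk2 gb T1 nm1 by auto
      moreover have "a \<in> It xi delta mu (n - 1)" "b \<in> It xi delta mu (n - 1)" "msim xi delta mu (n - 1) a b"
        using ab T1 nm1 unfolding It_def msim_def msim_in_def by auto
      moreover have "c \<in> It xi delta mu n" "d \<in> It xi delta mu n" "msim xi delta mu n c d"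
        using cd T2 unfolding It_def msim_def msim_in_def by auto
      ultimately show ?goal using uA by blast
    qed
    have inv: "?thesis \<or> (x \<in> Ilev (fst ?T2) n \<and> (butlast x = z1 \<or> (\<exists>xp g. ?R xp x \<and> {g, z1} \<in> ?E1 \<and>
       {g, butlast xp} \<in> ?E1 \<and> {g, butlast x} \<in> ?E1 \<and> Suc (length g) = k \<and> g \<in> fst ?G1)))"
      if "?R\<^sup>*\<^sup>* (z1 @ [i]) x" for x
      using that
    proof (induction rule: rtranclp_induct)
      case base then show ?case using x0I by simp
    next
      case (step x x')
      obtain g' where g': "{g', butlast x} \<in> ?E1" "{g', butlast x'} \<in> ?E1" "g' \<in> fst ?G1" "Suc (length g') = k"
        using L4s[OF g1 cvt[OF step.hyps(2)]] by blast
      have x'I: "x' \<in> Ilev (fst ?T2) n" using step.hyps(2) by (cases rule: symclpE) (auto simp: msim_in_def)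
      show ?case
      proof (cases "{g', z1} \<in> ?E1")
        case True then show ?thesis using x'I g' step.hyps(2) by blast
      next
        case False
        from step.IH show ?thesis
        proof (elim disjE conjE exE)
          assume "?goal" then show ?thesis by blast
        next
          assume "butlast x = z1" then show ?thesis using False g'(1) by simp
        next
          fix xp g assume xI: "x \<in> Ilev (fst ?T2) n" and rp: "?R xp x" and h: "{g, z1} \<in> ?E1" "{g, butlast xp} \<in> ?E1"
            "{g, butlast x} \<in> ?E1" "Suc (length g) = k" "g \<in> fst ?G1"
          have gg: "g \<noteq> g'" using False h(1) by auto
          have lbx: "length (butlast x) = Suc k1" using xI nk k_def by (simp add: Ilev_def)
          obtain a b u where abu: "msim_in mu (Suc k1) (tgraph xi delta (Suc k1) ?G0) a b" "{u, g} \<in> ?E0" "u \<in> fst ?G0"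
            "Suc (length u) = k1" "gdist (snd (tgraph xi delta (Suc k1) ?G0)) u a 2" "gdist (snd (tgraph xi delta (Suc k1) ?G0)) u b 2"
            using lemM[where xi=xi and delta=delta and mu=mu and c=g and p="butlast x" and c'=g', OF g0] h(3) g'(1) G1 gg lbx by auto
          have abu': "msim_in mu k ?T1 a b" "gdist (snd ?T1) u a 2" "gdist (snd ?T1) u b 2"
            using abu k_def by simp_all
          from rp show ?thesis
          proof (cases rule: symclpE)
            case base then show ?thesis using final[OF abu'(1) abu(2,3,4) abu'(2,3) base h(2,3,1,4)] by blast
          next
            case sym then show ?thesis using final[OF abu'(1) abu(2,3,4) abu'(2,3) sym h(3,2,1,4)] by blast
          qed
        qed
      qed
    qed
    from inv[OF rr] show ?thesis
    proof (elim disjE conjE exE)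
      assume "?goal" then show ?thesis by blast
    next
      assume "butlast (y @ [j]) = z1" then show ?thesis using Wy by simp
    next
      fix xp g assume h: "{g, z1} \<in> ?E1" "{g, butlast (y @ [j])} \<in> ?E1" "Suc (length g) = k" "g \<in> fst ?G1"
      have lg: "length g = k1" using h(3) k_def by simp
      have gI: "g \<in> I xi delta mu k1" using Iin[OF h(4) lg] .
      have "gdist ?E1 g y 1" using h(2) lv1 ly lg k_def by (intro gdist_intro walk1) auto
      then have A: "g \<in> alpha_i xi delta mu k 1 y" unfolding alpha_i_def using gI nm1 by simp
      have "walk ?E2 2 g v" using z(1) h(1) E01 lg lz1 lv k_def nk
        by (intro walk2[of g z1 _ v]) (auto simp: insert_commute)
      then have "gdist ?E2 g v 2" using lv2 lv lg nk k_def by (intro gdist_intro) auto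
      then have B: "g \<in> alpha_i xi delta mu n 2 v" unfolding alpha_i_def using gI nm1 by simp
      show ?thesis using A B disj by blast
    qed
  qed
qed



end
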